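(* Setting. Fix an integer $v\ge1$ and numbers $\mathbf p_{kj}\in(0,1)$, $k\in\{0,1,2,\dots\}$, $1\le j\le 2^{v-1}$, where $j$ numbers the binary words of length $v$ ending in $1$. Assume there are constants $1>\delta_1>\delta_2>0$ with $\delta_2\le\mathbf p_{kj}\le\delta_1$ for all $k,j$. Let the initial configuration $r(0)$ contain at least one $1$. Let $\tau_k$, $k\ge1$, be the regeneration times described in the context. Conclusion. For all $k,n\in\mathbb N$, $$\mathbf P(\tau_k\ge n)\le Ce^{-\rho n},\qquad C:=\frac{1}{1-(1-\delta_1)^{v-1}\delta_2},\quad \rho:=\frac1v\ln C.$$
   Context: Chain. The chain $r(n)=(r_i(n))_{i\le n}$ starts from the configuration $r(0)=(r_i(0))_{i\le0}\in\{0,1\}^{\{\dots,-1,0\}}$. Given $r(n)$, let $m_n:=\sup\{i\le n:r_i(n)=1\}$. Then $r(n+1)$ extends $r(n)$ by one symbol, which is $1$ with probability $\mathbf p_{k_nj_n}$ and $0$ otherwise. Here $k_n=n-m_n$ and $j_n$ is the number of the word $(r_{m_n-v+1}(n),\dots,r_{m_n}(n))$. Auxiliary Markov chain. $Y(n):=(n-m_n,(r_{m_n-v+1}(n),\dots,r_{m_n}(n)))$, and $y_0:=(0,(0,\dots,0,1))$. Regeneration times. $\tau_1:=\min\{n>0:Y(n)=y_0\}$ and $\tau_k:=\min\{n>\tau_1+\dots+\tau_{k-1}:Y(n)=y_0\}-(\tau_1+\dots+\tau_{k-1})$ for $k\ge2$. *)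

theory Defs
  imports "HOL-Probability.Probability"
begin

text \<open>The initial configuration r(0)
  is given by r0, where r0 i is the symbol at position -i (i = 0, 1, 2, ...).
  The bit sequence b gives the newly appended symbols: b i is the symbol at
  position i+1.\<close>
definition sym :: "(nat \<Rightarrow> bool) \<Rightarrow> (nat \<Rightarrow> bool) \<Rightarrow> int \<Rightarrow> bool" where
  "sym r0 b i = (if i \<le> 0 then r0 (nat (- i)) else b (nat (i - 1)))"

definition lastone :: "(nat \<Rightarrow> bool) \<Rightarrow> (nat \<Rightarrow> bool) \<Rightarrow> nat \<Rightarrow> int" where
  "lastone r0 b n = (GREATEST i::int. i \<le> int n \<and> sym r0 b i)"

definition word :: "nat \<Rightarrow> (nat \<Rightarrow> bool) \<Rightarrow> (nat \<Rightarrow> bool) \<Rightarrow> nat \<Rightarrow> bool list" where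
  "word v r0 b n = map (\<lambda>t. sym r0 b (lastone r0 b n - int v + 1 + int t)) [0..<v]"

definition Ystate :: "nat \<Rightarrow> (nat \<Rightarrow> bool) \<Rightarrow> (nat \<Rightarrow> bool) \<Rightarrow> nat \<Rightarrow> nat \<times> bool list" where
  "Ystate v r0 b n = (nat (int n - lastone r0 b n), word v r0 b n)"

definition y0 :: "nat \<Rightarrow> nat \<times> bool list" where
  "y0 v = (0, replicate (v - 1) False @ [True])"

primrec ret_time :: "nat \<Rightarrow> (nat \<Rightarrow> bool) \<Rightarrow> (nat \<Rightarrow> bool) \<Rightarrow> nat \<Rightarrow> enat" where
  "ret_time v r0 b 0 = 0"
| "ret_time v r0 b (Suc k) =
     (case ret_time v r0 b k of
        \<infinity> \<Rightarrow> \<infinity>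
      | enat a \<Rightarrow> (if \<exists>n>a. Ystate v r0 b n = y0 v
                  then enat (LEAST n. n > a \<and> Ystate v r0 b n = y0 v) else \<infinity>))"

definition tau :: "nat \<Rightarrow> (nat \<Rightarrow> bool) \<Rightarrow> (nat \<Rightarrow> bool) \<Rightarrow> nat \<Rightarrow> enat" where
  "tau v r0 b k = (case ret_time v r0 b (k - 1) of
       \<infinity> \<Rightarrow> \<infinity>
     | enat a \<Rightarrow> ret_time v r0 b k - enat a)"

text \<open>Transition probability of appending a 1 at time n, given the first n appended
  bits xs (the state at time n only depends on them).\<close>
definition step_prob :: "nat \<Rightarrow> (nat \<Rightarrow> bool list \<Rightarrow> real) \<Rightarrow> (nat \<Rightarrow> bool) \<Rightarrow> bool list \<Rightarrow> real" where
  "step_prob v p r0 xs =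
     (let Y = Ystate v r0 (\<lambda>i. if i < length xs then xs ! i else False) (length xs)
      in p (fst Y) (snd Y))"

end

theory Submission
  imports Defs
begin


lemma lastone_prop:
  assumes "r0 i0"
  shows "sym r0 b (lastone r0 b n) \<and> lastone r0 b n \<le> int n
         \<and> (\<forall>i. i \<le> int n \<and> sym r0 b i \<longrightarrow> i \<le> lastone r0 b n)"
proof -
  define S where "S = {i. - int i0 \<le> i \<and> i \<le> int n \<and> sym r0 b i}"
  have s0: "sym r0 b (- int i0)" using assms by (simp add: sym_def)
  have fin: "finite S" unfolding S_def by (rule finite_subset[of _ "{- int i0..int n}"]) auto
  have ne: "- int i0 \<in> S" unfolding S_def using s0 by auto
  define g where "g = Max S"
  have gS: "g \<in> S" unfolding g_def using fin ne using fin ne Max_in[of S] by blast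
  have gmax: "\<And>i. i \<le> int n \<Longrightarrow> sym r0 b i \<Longrightarrow> i \<le> g"
  proof -
    fix i assume "i \<le> int n" "sym r0 b i"
    show "i \<le> g"
    proof (cases "- int i0 \<le> i")
      case True then have "i \<in> S" using \<open>i \<le> int n\<close> \<open>sym r0 b i\<close> by (simp add: S_def)
      then show ?thesis unfolding g_def using fin by simp
    next
      case False then show ?thesis using gS by (auto simp: S_def)
    qed
  qed
  have "lastone r0 b n = g" unfolding lastone_def
    by (rule Greatest_equality) (use gS gmax in \<open>auto simp: S_def\<close>)
  then show ?thesis using gS gmax by (auto simp: S_def)
qed

lemma lastone_cong:
  assumes "\<And>i. i < n \<Longrightarrow> b i = b' i"
  shows "lastone r0 b n = lastone r0 b' n"
proof -
  have "\<And>i. i \<le> int n \<Longrightarrow> sym r0 b i = sym r0 b' i"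
    using assms by (auto simp: sym_def)
  then have "(\<lambda>i. i \<le> int n \<and> sym r0 b i) = (\<lambda>i. i \<le> int n \<and> sym r0 b' i)" by auto
  then show ?thesis unfolding lastone_def by simp
qed

lemma Ystate_cong:
  assumes "r0 i0" "\<And>i. i < n \<Longrightarrow> b i = b' i"
  shows "Ystate v r0 b n = Ystate v r0 b' n"
proof -
  have L: "lastone r0 b n = lastone r0 b' n" by (rule lastone_cong) (use assms in auto)
  have le: "lastone r0 b n \<le> int n" using lastone_prop[of r0 i0 b n, OF assms(1)] by blast
  have "\<And>i. i \<le> lastone r0 b n \<Longrightarrow> sym r0 b i = sym r0 b' i"
    using assms le by (auto simp: sym_def)
  then have W: "word v r0 b n = word v r0 b' n" unfolding word_def L[symmetric]
    by (auto intro!: map_cong)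
  show ?thesis unfolding Ystate_def W L ..
qed

lemma word_props:
  assumes "r0 i0" "v \<ge> 1"
  shows "length (word v r0 b n) = v \<and> last (word v r0 b n)"
proof -
  have "last (word v r0 b n) = sym r0 b (lastone r0 b n)"
    using assms(2) unfolding word_def
    by (simp add: last_map)
  then show ?thesis using lastone_prop[of r0 i0 b n, OF assms(1)] by (simp add: word_def)
qed

lemma Ystate_y0:
  assumes "v \<ge> 1" "\<And>t. t < v - 1 \<Longrightarrow> \<not> b (L + t)" "b (L + v - 1)"
  shows "Ystate v r0 b (L + v) = y0 v"
proof -
  have e: "nat (int (L + v) - 1) = L + v - 1" using assms(1) by simp
  have s: "sym r0 b (int (L + v))" using assms(1,3) e unfolding sym_def by auto
  have "lastone r0 b (L + v) = int (L + v)" unfolding lastone_def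
    by (rule Greatest_equality) (use s in auto)
  moreover have "word v r0 b (L + v) = replicate (v - 1) False @ [True]"
  proof (rule nth_equalityI)
    show "length (word v r0 b (L + v)) = length (replicate (v - 1) False @ [True])"
      using assms(1) by (simp add: word_def)
  next
    fix t assume "t < length (word v r0 b (L + v))"
    then have t: "t < v" by (simp add: word_def)
    have "word v r0 b (L + v) ! t = sym r0 b (int (L+v) - int v + 1 + int t)"
      using t \<open>lastone r0 b (L + v) = int (L + v)\<close> by (simp add: word_def)
    also have "\<dots> = b (L + t)"
    proof -
      have "int (L+v) - int v + 1 + int t = int (L + t) + 1" by simp
      moreover have "nat (int L + int t) = L + t" by (simp flip: of_nat_add del: of_nat_add)
      ultimately show ?thesis by (simp add: sym_def)
    qed
    finally have wt: "word v r0 b (L + v) ! t = b (L + t)" .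
    show "word v r0 b (L + v) ! t = (replicate (v - 1) False @ [True]) ! t"
    proof (cases "t < v - 1")
      case True then show ?thesis using assms t wt by (auto simp: nth_append)
    next
      case False then have "t = v - 1" using t by simp
      then show ?thesis using assms t wt by (auto simp: nth_append)
    qed
  qed
  ultimately show ?thesis by (simp add: Ystate_def y0_def)
qed



locale ctx = prob_space M for M :: "'a measure" +
  fixes b :: "nat \<Rightarrow> 'a \<Rightarrow> bool" and v :: nat and p :: "nat \<Rightarrow> bool list \<Rightarrow> real"
    and \<delta>1 \<delta>2 :: real and r0 :: "nat \<Rightarrow> bool"
  assumes meas: "\<And>i. b i \<in> measurable M (count_space UNIV)"
    and v: "v \<ge> 1"
    and delta: "1 > \<delta>1" "\<delta>1 > \<delta>2" "\<delta>2 > 0"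
    and pbound: "\<And>k w. length w = v \<Longrightarrow> last w \<Longrightarrow> \<delta>2 \<le> p k w \<and> p k w \<le> \<delta>1"
    and init: "\<exists>i. r0 i"
    and law: "\<And>xs. measure M {\<omega> \<in> space M. (\<forall>i<length xs. b i \<omega> = xs ! i) \<and> b (length xs) \<omega>}
                 = step_prob v p r0 xs * measure M {\<omega> \<in> space M. \<forall>i<length xs. b i \<omega> = xs ! i}"
begin

definition pre :: "nat \<Rightarrow> 'a \<Rightarrow> bool list" where
  "pre L \<omega> = map (\<lambda>i. b i \<omega>) [0..<L]"

definition Ev :: "nat \<Rightarrow> (bool list \<Rightarrow> bool) \<Rightarrow> 'a set" where
  "Ev L P = {\<omega> \<in> space M. P (pre L \<omega>)}"

definition extl :: "bool list \<Rightarrow> nat \<Rightarrow> bool" where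
  "extl xs = (\<lambda>i. if i < length xs then xs ! i else False)"

lemma length_pre[simp]: "length (pre L \<omega>) = L" by (simp add: pre_def)

lemma nth_pre[simp]: "i < L \<Longrightarrow> pre L \<omega> ! i = b i \<omega>" by (simp add: pre_def)

lemma pre_Suc: "pre (Suc L) \<omega> = pre L \<omega> @ [b L \<omega>]" by (simp add: pre_def)

lemma extl_pre: "i < L \<Longrightarrow> extl (pre L \<omega>) i = b i \<omega>" by (simp add: extl_def)

lemma pre_eq: "length xs = L \<Longrightarrow> (pre L \<omega> = xs) \<longleftrightarrow> (\<forall>i<L. b i \<omega> = xs ! i)"
  by (auto simp: list_eq_iff_nth_eq)

lemma pre_meas: "pre L \<in> measurable M (count_space UNIV)"
proof -
  have "pre L \<in> measurable M (count_space (UNIV :: bool list set))"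
  proof (subst measurable_count_space_eq2_countable, intro conjI ballI)
    fix xs :: "bool list"
    show "pre L -` {xs} \<inter> space M \<in> sets M"
    proof (cases "length xs = L")
      case True
      have "pre L -` {xs} \<inter> space M = {\<omega>\<in>space M. \<forall>i<L. b i \<omega> = xs ! i}"
        using pre_eq[OF True] by auto
      also have "\<dots> \<in> sets M"
        using meas[measurable] by measurable
      finally show ?thesis .
    next
      case False then have "pre L -` {xs} \<inter> space M = {}" by auto
      then show ?thesis by simp
    qed
  qed auto
  then show ?thesis by simp
qed

lemma Ev_meas[measurable]: "Ev L P \<in> sets M"
proof -
  have "Ev L P = pre L -` {xs. P xs} \<inter> space M" by (auto simp: Ev_def)
  also have "\<dots> \<in> sets M" using pre_meas by (rule measurable_sets) simp
  finally show ?thesis .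
qed

lemma Ev_union: "Ev L P = (\<Union>xs\<in>{xs. set xs \<subseteq> UNIV \<and> length xs = L \<and> P xs}. Ev L (\<lambda>zs. zs = xs))"
  by (auto simp: Ev_def)

lemma finite_lists: "finite {xs :: bool list. set xs \<subseteq> UNIV \<and> length xs = L \<and> P xs}"
  by (rule finite_subset[OF _ finite_lists_length_eq[of "UNIV :: bool set" L]]) auto

lemma Ev_sum: "measure M (Ev L P) = (\<Sum>xs\<in>{xs. set xs \<subseteq> UNIV \<and> length xs = L \<and> P xs}. measure M (Ev L (\<lambda>zs. zs = xs)))"
  apply (subst Ev_union)
  apply (rule finite_measure_finite_Union[OF finite_lists])
  apply auto[1]
  apply (auto simp: disjoint_family_on_def Ev_def)
  done

lemma sp_bounds: "\<delta>2 \<le> step_prob v p r0 xs \<and> step_prob v p r0 xs \<le> \<delta>1"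
proof -
  obtain i0 where i0: "r0 i0" using init by blast
  show ?thesis unfolding step_prob_def Let_def Ystate_def
    using pbound word_props[of r0 i0 v, OF i0 v] by simp
qed

lemma cyl_True: "length xs = L \<Longrightarrow>
  measure M (Ev (Suc L) (\<lambda>zs. zs = xs @ [True])) = step_prob v p r0 xs * measure M (Ev L (\<lambda>zs. zs = xs))"
proof -
  assume len: "length xs = L"
  have "Ev (Suc L) (\<lambda>zs. zs = xs @ [True]) = {\<omega> \<in> space M. (\<forall>i<length xs. b i \<omega> = xs ! i) \<and> b (length xs) \<omega>}"
    using pre_eq[OF len] len by (auto simp: Ev_def pre_Suc)
  moreover have "Ev L (\<lambda>zs. zs = xs) = {\<omega> \<in> space M. \<forall>i<length xs. b i \<omega> = xs ! i}"
    using pre_eq[OF len] len by (auto simp: Ev_def)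
  ultimately show ?thesis using law by simp
qed

lemma cyl_False: "length xs = L \<Longrightarrow>
  measure M (Ev (Suc L) (\<lambda>zs. zs = xs @ [False])) = (1 - step_prob v p r0 xs) * measure M (Ev L (\<lambda>zs. zs = xs))"
proof -
  assume len: "length xs = L"
  have "Ev (Suc L) (\<lambda>zs. zs = xs @ [False]) = Ev L (\<lambda>zs. zs = xs) - Ev (Suc L) (\<lambda>zs. zs = xs @ [True])"
    by (auto simp: Ev_def pre_Suc)
  moreover have "Ev (Suc L) (\<lambda>zs. zs = xs @ [True]) \<subseteq> Ev L (\<lambda>zs. zs = xs)"
    by (auto simp: Ev_def pre_Suc)
  ultimately show ?thesis using cyl_True[OF len]
    by (simp add: finite_measure_Diff left_diff_distrib)
qed

lemma step1:
  "measure M {\<omega>\<in>space M. P (pre L \<omega>) \<and> b L \<omega> = c} \<ge> (if c then \<delta>2 else 1 - \<delta>1) * measure M (Ev L P)"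
proof -
  let ?S = "{xs. set xs \<subseteq> UNIV \<and> length xs = L \<and> P xs}"
  have eq: "{\<omega>\<in>space M. P (pre L \<omega>) \<and> b L \<omega> = c} = (\<Union>xs\<in>?S. Ev (Suc L) (\<lambda>zs. zs = xs @ [c]))"
    by (auto simp: Ev_def pre_Suc)
  have "measure M {\<omega>\<in>space M. P (pre L \<omega>) \<and> b L \<omega> = c} = (\<Sum>xs\<in>?S. measure M (Ev (Suc L) (\<lambda>zs. zs = xs @ [c])))"
    unfolding eq
    apply (rule finite_measure_finite_Union[OF finite_lists])
    apply (auto intro: Ev_meas)[1]
    apply (auto simp: disjoint_family_on_def Ev_def pre_Suc)
    done
  also have "\<dots> \<ge> (\<Sum>xs\<in>?S. (if c then \<delta>2 else 1 - \<delta>1) * measure M (Ev L (\<lambda>zs. zs = xs)))"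
  proof (rule sum_mono)
    fix xs assume "xs \<in> ?S"
    then have len: "length xs = L" by simp
    show "(if c then \<delta>2 else 1 - \<delta>1) * measure M (Ev L (\<lambda>zs. zs = xs)) \<le> measure M (Ev (Suc L) (\<lambda>zs. zs = xs @ [c]))"
      using cyl_True[OF len] cyl_False[OF len] sp_bounds[of xs]
      by (cases c) (auto intro!: mult_right_mono)
  qed
  finally show ?thesis by (simp add: Ev_sum[of L P] sum_distrib_left)
qed

lemma take_pre: "L \<le> N \<Longrightarrow> take L (pre N \<omega>) = pre L \<omega>"
  by (simp add: pre_def take_map)

lemma step_Ev: "{\<omega>\<in>space M. P (pre L \<omega>) \<and> b L \<omega> = c} = Ev (Suc L) (\<lambda>zs. P (butlast zs) \<and> last zs = c)"
  by (auto simp: Ev_def pre_Suc)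

lemma path0:
  "measure M {\<omega>\<in>space M. P (pre L \<omega>) \<and> (\<forall>t<i. \<not> b (L+t) \<omega>)} \<ge> (1 - \<delta>1) ^ i * measure M (Ev L P)"
proof (induction i)
  case 0
  then show ?case by (simp add: Ev_def)
next
  case (Suc i)
  define P' where "P' zs = (P (take L zs) \<and> (\<forall>t<i. \<not> zs ! (L+t)))" for zs
  have e1: "{\<omega>\<in>space M. P (pre L \<omega>) \<and> (\<forall>t<Suc i. \<not> b (L+t) \<omega>)}
      = {\<omega>\<in>space M. P' (pre (L+i) \<omega>) \<and> b (L+i) \<omega> = False}"
    by (auto simp: P'_def take_pre less_Suc_eq)
  have e2: "Ev (L+i) P' = {\<omega>\<in>space M. P (pre L \<omega>) \<and> (\<forall>t<i. \<not> b (L+t) \<omega>)}"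
    by (auto simp: P'_def take_pre Ev_def)
  have "(1 - \<delta>1) ^ Suc i * measure M (Ev L P) = (1 - \<delta>1) * ((1 - \<delta>1) ^ i * measure M (Ev L P))" by simp
  also have "\<dots> \<le> (1 - \<delta>1) * measure M (Ev (L+i) P')"
    unfolding e2 using Suc delta by (intro mult_left_mono) auto
  also have "\<dots> \<le> measure M {\<omega>\<in>space M. P' (pre (L+i) \<omega>) \<and> b (L+i) \<omega> = False}"
    using step1[where P=P' and L="L+i" and c=False] by simp
  finally show ?case unfolding e1 .
qed

definition q where "q = (1 - \<delta>1) ^ (v - 1) * \<delta>2"

definition PS where "PS L P = {\<omega>\<in>space M. P (pre L \<omega>) \<and> (\<forall>t<v-1. \<not> b (L+t) \<omega>) \<and> b (L+v-1) \<omega>}"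

lemma path_full: "measure M (PS L P) \<ge> q * measure M (Ev L P)"
proof -
  define P' where "P' zs = (P (take L zs) \<and> (\<forall>t<v-1. \<not> zs ! (L+t)))" for zs
  have e1: "PS L P = {\<omega>\<in>space M. P' (pre (L+(v-1)) \<omega>) \<and> b (L+(v-1)) \<omega> = True}"
    using v by (auto simp: PS_def P'_def take_pre)
  have e2: "Ev (L+(v-1)) P' = {\<omega>\<in>space M. P (pre L \<omega>) \<and> (\<forall>t<v-1. \<not> b (L+t) \<omega>)}"
    by (auto simp: P'_def take_pre Ev_def)
  have "q * measure M (Ev L P) = \<delta>2 * ((1 - \<delta>1) ^ (v-1) * measure M (Ev L P))" by (simp add: q_def)
  also have "\<dots> \<le> \<delta>2 * measure M (Ev (L+(v-1)) P')"
    unfolding e2 using path0[where P=P and L=L and i="v-1"] delta by (intro mult_left_mono) auto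
  also have "\<dots> \<le> measure M (PS L P)"
    unfolding e1 using step1[where P=P' and L="L+(v-1)" and c=True] by simp
  finally show ?thesis .
qed

lemma PS_meas: "PS L P \<in> sets M"
proof -
  define P' where "P' zs = (P (take L zs) \<and> (\<forall>t<v-1. \<not> zs ! (L+t)))" for zs
  have e1: "PS L P = {\<omega>\<in>space M. P' (pre (L+(v-1)) \<omega>) \<and> b (L+(v-1)) \<omega> = True}"
    using v by (auto simp: PS_def P'_def take_pre)
  show ?thesis unfolding e1 step_Ev by (rule Ev_meas)
qed

definition NR where "NR L c = {\<omega>\<in>space M. \<forall>t. L < t \<and> t \<le> c \<longrightarrow> Ystate v r0 (\<lambda>i. b i \<omega>) t \<noteq> y0 v}"

lemma blockB: "measure M (Ev L P \<inter> NR L (L+v)) \<le> (1 - q) * measure M (Ev L P)"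
proof -
  have sub: "Ev L P \<inter> NR L (L+v) \<subseteq> Ev L P - PS L P"
  proof
    fix \<omega> assume a: "\<omega> \<in> Ev L P \<inter> NR L (L+v)"
    show "\<omega> \<in> Ev L P - PS L P"
    proof (rule ccontr)
      assume "\<omega> \<notin> Ev L P - PS L P"
      then have "\<omega> \<in> PS L P" using a by auto
      then have "Ystate v r0 (\<lambda>i. b i \<omega>) (L + v) = y0 v"
        by (intro Ystate_y0[OF v]) (auto simp: PS_def)
      moreover have "L < L + v" using v by simp
      ultimately show False using a by (auto simp: NR_def)
    qed
  qed
  have "PS L P \<subseteq> Ev L P" by (auto simp: PS_def Ev_def)
  then have "measure M (Ev L P - PS L P) = measure M (Ev L P) - measure M (PS L P)"
    by (intro finite_measure_Diff Ev_meas PS_meas)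
  moreover have "measure M (Ev L P \<inter> NR L (L+v)) \<le> measure M (Ev L P - PS L P)"
    by (intro finite_measure_mono[OF sub] sets.Diff Ev_meas PS_meas)
  ultimately show ?thesis using path_full[of L P] by (simp add: left_diff_distrib)
qed

lemma Y_pre: "t \<le> N \<Longrightarrow> Ystate v r0 (extl (pre N \<omega>)) t = Ystate v r0 (\<lambda>i. b i \<omega>) t"
proof -
  assume "t \<le> N"
  obtain i0 where i0: "r0 i0" using init by blast
  show ?thesis by (rule Ystate_cong[of r0 i0, OF i0]) (use \<open>t \<le> N\<close> in \<open>auto simp: extl_pre\<close>)
qed

lemma q_bounds: "0 < q" "q < 1"
proof -
  have a: "0 < (1 - \<delta>1) ^ (v - 1)" using delta by simp
  have b: "(1 - \<delta>1) ^ (v - 1) \<le> 1" using delta by (intro power_le_one) auto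
  show "0 < q" using a delta by (simp add: q_def)
  have c: "(1 - \<delta>1) ^ (v - 1) * \<delta>2 \<le> 1 * \<delta>2" using b delta by (intro mult_right_mono) auto
  show "q < 1" using c delta unfolding q_def by linarith
qed

lemma blockG: "measure M (Ev L P \<inter> NR L (L + v * j)) \<le> (1 - q) ^ j * measure M (Ev L P)"
proof (induction j arbitrary: L P)
  case 0
  have "Ev L P \<inter> NR L (L + v * 0) = Ev L P" by (auto simp: NR_def Ev_def)
  then show ?case by simp
next
  case (Suc j)
  define P' where "P' zs = (P (take L zs) \<and> (\<forall>t. L < t \<and> t \<le> L + v \<longrightarrow> Ystate v r0 (extl zs) t \<noteq> y0 v))" for zs
  have e1: "Ev (L+v) P' = Ev L P \<inter> NR L (L+v)"
    by (auto simp: Ev_def NR_def P'_def take_pre Y_pre)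
  have e2: "Ev L P \<inter> NR L (L + v * Suc j) = Ev (L+v) P' \<inter> NR (L+v) (L + v + v * j)"
    unfolding e1 apply (auto simp: NR_def)
    by (metis add.assoc not_le)
  have "measure M (Ev L P \<inter> NR L (L + v * Suc j)) \<le> (1 - q) ^ j * measure M (Ev (L+v) P')"
    unfolding e2 by (rule Suc.IH)
  also have "\<dots> \<le> (1 - q) ^ j * ((1 - q) * measure M (Ev L P))"
    unfolding e1 using q_bounds by (intro mult_left_mono blockB) auto
  finally show ?case by (simp add: mult.assoc mult.left_commute)
qed

end


lemma R_Suc_enat:
  assumes "ret_time v r0 b (Suc k) = enat a"
  shows "\<exists>a'. ret_time v r0 b k = enat a' \<and> a' < a \<and> Ystate v r0 b a = y0 v
            \<and> (\<forall>t. a' < t \<and> t < a \<longrightarrow> Ystate v r0 b t \<noteq> y0 v)"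
proof (cases "ret_time v r0 b k")
  case (enat a')
  have ex: "\<exists>n>a'. Ystate v r0 b n = y0 v"
  proof (rule ccontr)
    assume "\<not> ?thesis" then show False using assms enat by (auto split: if_splits)
  qed
  then have aeq: "a = (LEAST n. n > a' \<and> Ystate v r0 b n = y0 v)" using assms enat by simp
  have "a > a' \<and> Ystate v r0 b a = y0 v" unfolding aeq using ex by (rule LeastI_ex)
  moreover have "\<forall>t. a' < t \<and> t < a \<longrightarrow> Ystate v r0 b t \<noteq> y0 v"
    unfolding aeq using not_less_Least by blast
  ultimately show ?thesis using enat by blast
next
  case infinity then show ?thesis using assms by simp
qed

lemma R_Suc_enat_intro:
  assumes "ret_time v r0 b k = enat a'" "a' < a" "Ystate v r0 b a = y0 v"
    "\<forall>t. a' < t \<and> t < a \<longrightarrow> Ystate v r0 b t \<noteq> y0 v"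
  shows "ret_time v r0 b (Suc k) = enat a"
proof -
  have ex: "\<exists>n>a'. Ystate v r0 b n = y0 v" using assms by blast
  have "(LEAST n. n > a' \<and> Ystate v r0 b n = y0 v) = a"
    by (rule Least_equality) (use assms in \<open>auto simp: not_less[symmetric]\<close>)
  then show ?thesis using assms ex by simp
qed

lemma RD:
  assumes i0: "r0 i0"
  shows "ret_time v r0 b k = enat a \<Longrightarrow> (\<And>i. i < a \<Longrightarrow> b i = b' i) \<Longrightarrow> ret_time v r0 b' k = enat a"
proof (induction k arbitrary: a)
  case 0 then show ?case by (simp add: zero_enat_def)
next
  case (Suc k)
  obtain a' where a': "ret_time v r0 b k = enat a'" "a' < a" "Ystate v r0 b a = y0 v"
    "\<forall>t. a' < t \<and> t < a \<longrightarrow> Ystate v r0 b t \<noteq> y0 v"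
    using R_Suc_enat[OF Suc.prems(1)] by blast
  have Yeq: "Ystate v r0 b t = Ystate v r0 b' t" if "t \<le> a" for t
    by (rule Ystate_cong[of r0 i0, OF i0]) (use Suc.prems(2) that in auto)
  have "ret_time v r0 b' k = enat a'" using Suc.IH[OF a'(1)] Suc.prems(2) a'(2) by auto
  then show ?case
    by (rule R_Suc_enat_intro) (use a' Yeq in auto)
qed

context ctx begin

definition E where "E a k = {\<omega>\<in>space M. ret_time v r0 (\<lambda>i. b i \<omega>) k = enat a}"

lemma E_Ev: "E a k = Ev a (\<lambda>zs. ret_time v r0 (extl zs) k = enat a)"
proof -
  obtain i0 where i0: "r0 i0" using init by blast
  show ?thesis unfolding E_def Ev_def
  proof (intro set_eqI iffI; clarsimp)
    fix x assume h: "ret_time v r0 (\<lambda>i. b i x) k = enat a"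
    show "ret_time v r0 (extl (pre a x)) k = enat a"
      by (rule RD[of r0 i0, OF i0 h]) (simp add: extl_pre)
  next
    fix x assume h: "ret_time v r0 (extl (pre a x)) k = enat a"
    show "ret_time v r0 (\<lambda>i. b i x) k = enat a"
      by (rule RD[of r0 i0, OF i0 h]) (simp add: extl_pre)
  qed
qed

lemma E_meas: "E a k \<in> sets M" unfolding E_Ev by (rule Ev_meas)

lemma NR_meas: "NR L c \<in> sets M"
proof -
  have "NR L c = Ev c (\<lambda>zs. \<forall>t. L < t \<and> t \<le> c \<longrightarrow> Ystate v r0 (extl zs) t \<noteq> y0 v)"
    by (auto simp: NR_def Ev_def Y_pre)
  then show ?thesis by simp
qed

definition Inf where "Inf k = {\<omega>\<in>space M. ret_time v r0 (\<lambda>i. b i \<omega>) k = \<infinity>}"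

lemma Inf_meas: "Inf k \<in> sets M"
proof -
  have "Inf k = space M - (\<Union>a. E a k)" by (auto simp: Inf_def E_def)
  then show ?thesis using E_meas by auto
qed

lemma EG: "measure M (E a k \<inter> NR a (a + v * j)) \<le> (1 - q) ^ j"
proof -
  have "measure M (E a k \<inter> NR a (a + v * j)) \<le> (1 - q) ^ j * measure M (E a k)"
    unfolding E_Ev by (rule blockG)
  also have "\<dots> \<le> (1 - q) ^ j * 1"
    using q_bounds by (intro mult_left_mono) auto
  finally show ?thesis by simp
qed

lemma Inf_null: "Inf k \<in> null_sets M"
proof (induction k)
  case 0 then show ?case by (simp add: Inf_def)
next
  case (Suc k)
  define N where "N a = (\<Inter>j. E a k \<inter> NR a (a + v * j))" for a
  have Nm: "N a \<in> sets M" for a unfolding N_def using E_meas NR_meas by auto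
  have Nnull: "N a \<in> null_sets M" for a
  proof -
    have "(\<lambda>j. (1 - q) ^ j) \<longlonglongrightarrow> 0" using q_bounds by (intro LIMSEQ_realpow_zero) auto
    moreover have "\<forall>j\<ge>0. measure M (N a) \<le> (1 - q) ^ j"
    proof (intro allI impI)
      fix j :: nat
      have "measure M (N a) \<le> measure M (E a k \<inter> NR a (a + v * j))"
        by (rule finite_measure_mono) (use E_meas NR_meas in \<open>auto simp: N_def\<close>)
      then show "measure M (N a) \<le> (1 - q) ^ j" using EG[of a k j] by simp
    qed
    ultimately have "measure M (N a) \<le> 0" by (intro LIMSEQ_le_const) auto
    then have "measure M (N a) = 0" using measure_nonneg[of M "N a"] by simp
    then show ?thesis using Nm by (simp add: emeasure_eq_measure null_setsI)
  qed
  have sub: "Inf (Suc k) \<subseteq> Inf k \<union> (\<Union>a. N a)"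
  proof
    fix \<omega> assume w: "\<omega> \<in> Inf (Suc k)"
    show "\<omega> \<in> Inf k \<union> (\<Union>a. N a)"
    proof (cases "ret_time v r0 (\<lambda>i. b i \<omega>) k")
      case (enat a)
      then have "\<not> (\<exists>n>a. Ystate v r0 (\<lambda>i. b i \<omega>) n = y0 v)"
        using w by (auto simp: Inf_def split: if_splits)
      then have "\<omega> \<in> N a" using w enat by (auto simp: N_def E_def NR_def Inf_def)
      then show ?thesis by blast
    next
      case infinity then show ?thesis using w by (auto simp: Inf_def)
    qed
  qed
  have nu: "(Inf k \<union> (\<Union>a. N a)) \<in> null_sets M" using Suc Nnull by auto
  have "emeasure M (Inf (Suc k)) \<le> emeasure M (Inf k \<union> (\<Union>a. N a))"
    by (rule emeasure_mono[OF sub null_setsD2[OF nu]])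
  then have "emeasure M (Inf (Suc k)) \<le> 0"
    using null_setsD1[OF nu] by simp
  then show ?case using Inf_meas by (auto intro: null_setsI)
qed

end


context ctx begin

lemma main_bound:
  "measure M {\<omega> \<in> space M. tau v r0 (\<lambda>i. b i \<omega>) (Suc k) \<ge> enat (Suc m)} \<le> (1 - q) ^ (m div v)"
proof -
  define j where "j = m div v"
  have vj: "v * j \<le> m" unfolding j_def by simp
  define G where "G a = E a k \<inter> NR a (a + v * j)" for a
  have sub: "{\<omega> \<in> space M. tau v r0 (\<lambda>i. b i \<omega>) (Suc k) \<ge> enat (Suc m)} \<subseteq> (\<Union>a. G a) \<union> Inf k"
  proof
    fix \<omega> assume w: "\<omega> \<in> {\<omega> \<in> space M. tau v r0 (\<lambda>i. b i \<omega>) (Suc k) \<ge> enat (Suc m)}"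
    show "\<omega> \<in> (\<Union>a. G a) \<union> Inf k"
    proof (cases "ret_time v r0 (\<lambda>i. b i \<omega>) k")
      case infinity then show ?thesis using w by (auto simp: Inf_def)
    next
      case (enat a)
      have "\<omega> \<in> NR a (a + v * j)"
      proof (cases "ret_time v r0 (\<lambda>i. b i \<omega>) (Suc k)")
        case infinity
        then have "\<not> (\<exists>n>a. Ystate v r0 (\<lambda>i. b i \<omega>) n = y0 v)"
          using enat by (auto split: if_splits)
        then show ?thesis using w by (auto simp: NR_def)
      next
        case (enat c)
        obtain a' where a': "ret_time v r0 (\<lambda>i. b i \<omega>) k = enat a'"
          "\<forall>t. a' < t \<and> t < c \<longrightarrow> Ystate v r0 (\<lambda>i. b i \<omega>) t \<noteq> y0 v"
          using R_Suc_enat[OF enat] by blast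
        have aa: "a' = a" using a'(1) \<open>ret_time v r0 (\<lambda>i. b i \<omega>) k = enat a\<close> by simp
        have "enat (Suc m) \<le> enat c - enat a"
          using w enat \<open>ret_time v r0 (\<lambda>i. b i \<omega>) k = enat a\<close> by (simp add: tau_def)
        then have "Suc m \<le> c - a" by simp
        then have "a + v * j < c" using vj by linarith
        then show ?thesis using w a'(2) aa by (auto simp: NR_def)
      qed
      then have "\<omega> \<in> G a" using w enat by (auto simp: G_def E_def)
      then show ?thesis by blast
    qed
  qed
  have Gm: "G a \<in> sets M" for a unfolding G_def using E_meas NR_meas by auto
  have dE: "disjoint_family (\<lambda>a. E a k)" by (auto simp: disjoint_family_on_def E_def)
  have dG: "disjoint_family G" by (auto simp: disjoint_family_on_def E_def G_def)
  have "measure M {\<omega> \<in> space M. tau v r0 (\<lambda>i. b i \<omega>) (Suc k) \<ge> enat (Suc m)}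
      \<le> measure M ((\<Union>a. G a) \<union> Inf k)"
    by (rule finite_measure_mono[OF sub]) (use Gm Inf_meas in auto)
  also have "\<dots> = measure M (\<Union>a. G a)"
    by (rule measure_Un_null_set) (use Gm Inf_null in auto)
  also have "\<dots> \<le> (1 - q) ^ j * measure M (\<Union>a. E a k)"
  proof (rule sums_le)
    show "(\<lambda>a. measure M (G a)) sums measure M (\<Union>a. G a)"
      by (rule finite_measure_UNION) (use Gm dG in auto)
    show "(\<lambda>a. (1 - q) ^ j * measure M (E a k)) sums ((1 - q) ^ j * measure M (\<Union>a. E a k))"
      by (intro sums_mult finite_measure_UNION) (use E_meas dE in auto)
    show "\<And>a. measure M (G a) \<le> (1 - q) ^ j * measure M (E a k)"
      unfolding G_def E_Ev by (rule blockG)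
  qed
  also have "\<dots> \<le> (1 - q) ^ j * 1"
    using q_bounds by (intro mult_left_mono) auto
  finally show ?thesis by (simp add: j_def)
qed

end

lemma final_arith:
  fixes x :: real and v n :: nat
  assumes "0 < x" "x < 1" "v \<ge> 1" "n \<ge> 1"
  shows "x ^ ((n - 1) div v) \<le> (1 / x) * exp (- ((1 / real v) * ln (1 / x)) * real n)"
proof -
  define j where "j = (n - 1) div v"
  have "n - 1 = v * j + (n - 1) mod v" unfolding j_def by simp
  moreover have "(n - 1) mod v < v" using assms by simp
  moreover have "v * (j + 1) = v * j + v" by simp
  ultimately have "n \<le> v * (j + 1)" using assms by linarith
  then have "real n \<le> real v * (real j + 1)" by (metis of_nat_1 of_nat_add of_nat_le_iff of_nat_mult)
  then have jn: "real n / real v - 1 \<le> real j" using assms by (simp add: field_simps)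
  have "(1 / x) * exp (- ((1 / real v) * ln (1 / x)) * real n) = x powr (real n / real v - 1)"
  proof -
    have "- ((1 / real v) * ln (1 / x)) * real n = (real n / real v) * ln x"
      using assms by (simp add: ln_div)
    then have "exp (- ((1 / real v) * ln (1 / x)) * real n) = x powr (real n / real v)"
      using assms by (simp add: powr_def mult.commute)
    moreover have "x powr (real n / real v - 1) = x powr (real n / real v) / x"
      using assms by (simp add: powr_diff)
    ultimately show ?thesis by simp
  qed
  moreover have "x ^ j = x powr real j" using assms by (simp add: powr_realpow)
  moreover have "x powr real j \<le> x powr (real n / real v - 1)"
    by (rule powr_mono'[OF jn]) (use assms in auto)
  ultimately show ?thesis unfolding j_def by simp
qed

theorem lemma4p1:
  fixes M :: "'a measure" and b :: "nat \<Rightarrow> 'a \<Rightarrow> bool"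
    and v :: nat and p :: "nat \<Rightarrow> bool list \<Rightarrow> real" and \<delta>1 \<delta>2 :: real
    and r0 :: "nat \<Rightarrow> bool"
  assumes "prob_space M"
    and meas: "\<And>i. b i \<in> measurable M (count_space UNIV)"
    and v: "v \<ge> 1"
    and delta: "1 > \<delta>1" "\<delta>1 > \<delta>2" "\<delta>2 > 0"
    and pbound: "\<And>k w. length w = v \<Longrightarrow> last w \<Longrightarrow> \<delta>2 \<le> p k w \<and> p k w \<le> \<delta>1"
    and init: "\<exists>i. r0 i"
    and law: "\<And>xs. measure M {\<omega> \<in> space M. (\<forall>i<length xs. b i \<omega> = xs ! i) \<and> b (length xs) \<omega>}
                 = step_prob v p r0 xs * measure M {\<omega> \<in> space M. \<forall>i<length xs. b i \<omega> = xs ! i}"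
    and k: "k \<ge> 1"
  shows "measure M {\<omega> \<in> space M. tau v r0 (\<lambda>i. b i \<omega>) k \<ge> enat n}
           \<le> (1 / (1 - (1 - \<delta>1) ^ (v - 1) * \<delta>2))
             * exp (- ((1 / real v) * ln (1 / (1 - (1 - \<delta>1) ^ (v - 1) * \<delta>2))) * real n)"
proof -
  interpret C: ctx M b v p \<delta>1 \<delta>2 r0
    using assms by (intro ctx.intro ctx_axioms.intro) auto
  have qd: "C.q = (1 - \<delta>1) ^ (v - 1) * \<delta>2" by (simp add: C.q_def)
  have q: "0 < C.q" "C.q < 1" using C.q_bounds by auto
  show ?thesis
  proof (cases n)
    case 0
    have "measure M {\<omega> \<in> space M. tau v r0 (\<lambda>i. b i \<omega>) k \<ge> enat n} \<le> 1" by (rule C.prob_le_1)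
    also have "1 \<le> 1 / (1 - C.q)" using q by (simp add: field_simps)
    finally show ?thesis using 0 qd by simp
  next
    case (Suc m)
    obtain k' where k': "k = Suc k'" using k by (cases k) auto
    have "measure M {\<omega> \<in> space M. tau v r0 (\<lambda>i. b i \<omega>) k \<ge> enat n} \<le> (1 - C.q) ^ (m div v)"
      unfolding k' Suc by (rule C.main_bound)
    also have "\<dots> \<le> (1 / (1 - C.q)) * exp (- ((1 / real v) * ln (1 / (1 - C.q))) * real n)"
      using final_arith[of "1 - C.q" v n] q v Suc by simp
    finally show ?thesis using qd by simp
  qed
qed

end
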